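(* Let $F$ be a cumulative distribution function of a probability distribution supported on $\mathcal{S}$ which is Lipschitz continuous on $\mathcal{S}$, and let $\boldsymbol{X}_1,\boldsymbol{X}_2,\dots$ be i.i.d. with c.d.f. $F$. For $\boldsymbol{x}\in\mathcal{S}$ and $m\in\mathbb{N}$ let $$N_{\boldsymbol{x},m} := \Big\{\boldsymbol{k}\in\mathbb{N}_0^d\cap m\mathcal{S} : \max_{1\le i\le d}\big|\tfrac{k_i}{m}-x_i\big|\le\alpha_m\Big\}.$$ Then, for all $m=m(n)\ge2$ satisfying $m^{-1}\le\beta_{n,m}\le\alpha_m$, we have, as $n\to\infty$, $$\sup_{\boldsymbol{x}\in\mathrm{Int}(\mathcal{S})}\ \max_{\boldsymbol{k}\in N_{\boldsymbol{x},m}}\big|F_n(\boldsymbol{k}/m)-F(\boldsymbol{k}/m)-F_n(\boldsymbol{x})+F(\boldsymbol{x})\big| = \mathcal{O}(\beta_{n,m})\quad\text{almost surely}.$$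
   Context: Let $d\ge1$, $\|\boldsymbol{x}\|_1=\sum_i|x_i|$, $\mathcal{S}:=\{\boldsymbol{x}\in[0,1]^d:\|\boldsymbol{x}\|_1\le1\}$, $\mathrm{Int}(\mathcal{S}):=\{\boldsymbol{x}\in(0,1)^d:\|\boldsymbol{x}\|_1<1\}$, and $\mathbb{N}_0^d\cap m\mathcal{S}$ is the set of $\boldsymbol{k}\in\mathbb{N}_0^d$ with $\|\boldsymbol{k}\|_1\le m$. $F_n(\boldsymbol{x}) := n^{-1}\sum_{i=1}^n\mathbf{1}\{\boldsymbol{X}_i\le\boldsymbol{x}\}$ (componentwise inequality). Let $\alpha_n := (n^{-1}\log n)^{1/2}$ and $\beta_{n,m} := \alpha_n\sqrt{\alpha_m}$. *)

theory Defs
  imports "HOL-Probability.Probability"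
begin

definition simplexS :: "(real^'d::finite) set" where
  "simplexS = {x. (\<forall>i. 0 \<le> x$i \<and> x$i \<le> 1) \<and> (\<Sum>i\<in>UNIV. \<bar>x$i\<bar>) \<le> 1}"

definition simplexInt :: "(real^'d::finite) set" where
  "simplexInt = {x. (\<forall>i. 0 < x$i \<and> x$i < 1) \<and> (\<Sum>i\<in>UNIV. \<bar>x$i\<bar>) < 1}"

definition cdfv :: "(real^'d::finite) measure \<Rightarrow> real^'d \<Rightarrow> real" where
  "cdfv \<mu> x = measure \<mu> {y. \<forall>j. y$j \<le> x$j}"

definition empcdf :: "(nat \<Rightarrow> 'a \<Rightarrow> real^'d::finite) \<Rightarrow> nat \<Rightarrow> 'a \<Rightarrow> real^'d \<Rightarrow> real" where
  "empcdf X n \<omega> x = real (card {i\<in>{1..n}. \<forall>j. X i \<omega> $ j \<le> x $ j}) / real n"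

definition alpha :: "nat \<Rightarrow> real" where
  "alpha n = sqrt (ln (real n) / real n)"

definition beta :: "nat \<Rightarrow> nat \<Rightarrow> real" where
  "beta n m = alpha n * sqrt (alpha m)"

definition scalek :: "nat^'d::finite \<Rightarrow> nat \<Rightarrow> real^'d" where
  "scalek k m = (\<chi> i. real (k$i) / real m)"

definition Nxm :: "real^'d::finite \<Rightarrow> nat \<Rightarrow> (nat^'d) set" where
  "Nxm x m = {k. (\<Sum>i\<in>UNIV. k$i) \<le> m \<and> (\<forall>i. \<bar>real (k$i) / real m - x$i\<bar> \<le> alpha m)}"

end

theory Submission
  imports Defs
begin
lemma exp_bound2: fixes u::real assumes "\<bar>u\<bar> \<le> 1" shows "exp u \<le> 1 + u + u\<^sup>2"
proof (cases "u \<ge> 0")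
  case True then show ?thesis using exp_bound assms by auto
next
  case False
  define v where "v = -u"
  have v: "0 \<le> v" "v \<le> 1" using False assms by (auto simp: v_def)
  have e: "1 + v + v\<^sup>2 / 2 \<le> exp v" using exp_lower_Taylor_quadratic v by auto
  have p: "1 \<le> (1 - v + v\<^sup>2) * (1 + v + v\<^sup>2 / 2)"
  proof -
    have q: "(1 - v + v\<^sup>2) * (2 + 2 * v + v\<^sup>2) = 2 + v\<^sup>2 + v^3 + v^4"
      by algebra
    have "2 \<le> 2 + v\<^sup>2 + v^3 + v^4" using v by simp
    hence "2 \<le> (1 - v + v\<^sup>2) * (2 + 2 * v + v\<^sup>2)" using q by simp
    moreover have "(1 - v + v\<^sup>2) * (2 + 2 * v + v\<^sup>2) = 2 * ((1 - v + v\<^sup>2) * (1 + v + v\<^sup>2 / 2))"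
    proof -
      have "2 * (1 + v + v\<^sup>2 / 2) = 2 + 2 * v + v\<^sup>2" by simp
      thus ?thesis by (metis mult.left_commute)
    qed
    ultimately show ?thesis by linarith
  qed
  have pos: "0 < 1 - v + v\<^sup>2" using v by (smt (verit) power2_less_eq_zero_iff zero_le_power2)
  have "1 \<le> (1 - v + v\<^sup>2) * exp v"
    using p e pos by (meson dual_order.trans less_eq_real_def mult_left_mono)
  hence "exp (-v) \<le> 1 - v + v\<^sup>2"
    by (simp add: exp_minus field_simps)
  then show ?thesis by (simp add: v_def)
qed

lemma tail_one:
  fixes M :: "'a measure" and \<mu> :: "'b::topological_space measure"
    and X :: "nat \<Rightarrow> 'a \<Rightarrow> 'b" and g :: "'b \<Rightarrow> real"
  assumes PM: "prob_space M"
    and indep: "prob_space.indep_vars M (\<lambda>_. borel) X UNIV"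
    and distr: "\<And>i. distr M borel (X i) = \<mu>"
    and Xm[measurable]: "\<And>i. X i \<in> borel_measurable M"
    and gm[measurable]: "g \<in> borel_measurable borel" and gb: "\<And>y. \<bar>g y\<bar> \<le> 1"
    and l: "0 < l" "l \<le> 1" and V: "(\<integral>y. (g y)\<^sup>2 \<partial>\<mu>) \<le> V" and I: "finite I"
  shows "measure M {\<omega>\<in>space M. t \<le> (\<Sum>i\<in>I. g (X i \<omega>)) - real (card I) * (\<integral>y. g y \<partial>\<mu>)}
         \<le> exp (- l * t + real (card I) * l\<^sup>2 * V)"
proof -
  interpret prob_space M by fact
  have Pmu: "prob_space \<mu>" using distr[of 0] prob_space_distr[OF Xm[of 0]] by simp
  interpret mu: prob_space \<mu> by fact
  have smu: "sets \<mu> = sets borel" using distr[of 0] by (metis sets_distr)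
  have gmu[measurable]: "g \<in> borel_measurable \<mu>" using gm by (subst measurable_cong_sets[OF smu refl])
  define e where "e = (\<integral>y. g y \<partial>\<mu>)"
  have intg: "integrable \<mu> g"
    by (rule mu.integrable_const_bound[where B=1]) (use gb in auto)
  have intg2: "integrable \<mu> (\<lambda>y. (g y)\<^sup>2)"
    by (rule mu.integrable_const_bound[where B=1]) (use gb in \<open>auto simp: abs_square_le_1\<close>)
  have intexp: "integrable \<mu> (\<lambda>y. exp (l * g y))"
  proof (rule mu.integrable_const_bound[where B="exp l"])
    show "AE y in \<mu>. norm (exp (l * g y)) \<le> exp l"
    proof (rule AE_I2)
      fix y
      have "g y \<le> 1" using gb[of y] by (simp add: abs_le_iff)
      hence "l * g y \<le> l * 1" using l by (intro mult_left_mono) auto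
      thus "norm (exp (l * g y)) \<le> exp l" by simp
    qed
  qed simp
  have mgf_mu: "(\<integral>y. exp (l * (g y - e)) \<partial>\<mu>) \<le> exp (l\<^sup>2 * V)"
  proof -
    have "(\<integral>y. exp (l * (g y - e)) \<partial>\<mu>) = exp (-l*e) * (\<integral>y. exp (l * g y) \<partial>\<mu>)"
      by (simp add: right_diff_distrib exp_diff exp_minus field_simps)
    also have "(\<integral>y. exp (l * g y) \<partial>\<mu>) \<le> (\<integral>y. 1 + l * g y + l\<^sup>2 * (g y)\<^sup>2 \<partial>\<mu>)"
    proof (rule integral_mono[OF intexp])
      show "integrable \<mu> (\<lambda>y. 1 + l * g y + l\<^sup>2 * (g y)\<^sup>2)" using intg intg2 by auto
      fix y
      have "\<bar>l * g y\<bar> \<le> 1" using gb[of y] l by (simp add: abs_mult mult_le_one)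
      from exp_bound2[OF this] show "exp (l * g y) \<le> 1 + l * g y + l\<^sup>2 * (g y)\<^sup>2"
        by (simp add: power_mult_distrib)
    qed
    also have "(\<integral>y. 1 + l * g y + l\<^sup>2 * (g y)\<^sup>2 \<partial>\<mu>) = 1 + l * e + l\<^sup>2 * (\<integral>y. (g y)\<^sup>2 \<partial>\<mu>)"
      using intg intg2 by (simp add: e_def mu.prob_space)
    also have "\<dots> \<le> 1 + l * e + l\<^sup>2 * V" using V by (simp add: mult_left_mono)
    also have "\<dots> \<le> exp (l * e + l\<^sup>2 * V)" using exp_ge_add_one_self[of "l * e + l\<^sup>2 * V"] by linarith
    finally show ?thesis by (simp add: exp_add exp_minus field_simps)
  qed
  define Y where "Y i \<omega> = exp (l * (g (X i \<omega>) - e))" for i \<omega>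
  have Ym[measurable]: "Y i \<in> borel_measurable M" for i unfolding Y_def by (rule measurable_compose[OF Xm[of i]]) measurable
  have EY: "(\<integral>\<omega>. Y i \<omega> \<partial>M) \<le> exp (l\<^sup>2 * V)" for i
  proof -
    have "(\<integral>\<omega>. Y i \<omega> \<partial>M) = (\<integral>y. exp (l * (g y - e)) \<partial>distr M borel (X i))"
      unfolding Y_def by (subst integral_distr) (use Xm in auto)
    with mgf_mu distr[of i] show ?thesis by simp
  qed
  have intY: "integrable M (Y i)" for i
  proof (rule integrable_const_bound[where B="exp (l * (1 + \<bar>e\<bar>))"])
    show "AE \<omega> in M. norm (Y i \<omega>) \<le> exp (l * (1 + \<bar>e\<bar>))"
    proof (rule AE_I2)
      fix \<omega>
      have "g (X i \<omega>) - e \<le> 1 + \<bar>e\<bar>" using gb[of "X i \<omega>"] by (simp add: abs_le_iff) linarith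
      hence "l * (g (X i \<omega>) - e) \<le> l * (1 + \<bar>e\<bar>)" using l by (intro mult_left_mono) auto
      thus "norm (Y i \<omega>) \<le> exp (l * (1 + \<bar>e\<bar>))" by (simp add: Y_def)
    qed
  qed simp
  have indY: "indep_vars (\<lambda>_. borel) Y I"
    unfolding Y_def
    by (rule indep_vars_compose2[where X=X and M'="\<lambda>_. borel"])
       (use indep_vars_subset[OF indep] in auto)
  have EP: "(\<integral>\<omega>. (\<Prod>i\<in>I. Y i \<omega>) \<partial>M) = (\<Prod>i\<in>I. \<integral>\<omega>. Y i \<omega> \<partial>M)"
    by (rule indep_vars_lebesgue_integral[OF I indY intY])
  have intP: "integrable M (\<lambda>\<omega>. (\<Prod>i\<in>I. Y i \<omega>))"
    by (rule indep_vars_integrable[OF I indY intY])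
  have EPle: "(\<integral>\<omega>. (\<Prod>i\<in>I. Y i \<omega>) \<partial>M) \<le> exp (real (card I) * l\<^sup>2 * V)"
  proof -
    have "(\<Prod>i\<in>I. \<integral>\<omega>. Y i \<omega> \<partial>M) \<le> (\<Prod>i\<in>I. exp (l\<^sup>2 * V))"
      by (rule prod_mono) (use EY in \<open>auto simp: Y_def intro!: integral_nonneg_AE\<close>)
    also have "\<dots> = exp (real (card I) * l\<^sup>2 * V)"
      by (simp add: exp_of_nat_mult[symmetric] mult.assoc)
    finally show ?thesis using EP by simp
  qed
  have PY: "(\<Prod>i\<in>I. Y i \<omega>) = exp (l * ((\<Sum>i\<in>I. g (X i \<omega>)) - real (card I) * e))" for \<omega>
    by (simp add: Y_def exp_sum[symmetric] I sum_distrib_left right_diff_distrib sum_subtractf)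
  have "{\<omega>\<in>space M. t \<le> (\<Sum>i\<in>I. g (X i \<omega>)) - real (card I) * e}
        = {\<omega>\<in>space M. exp (l * t) \<le> (\<Prod>i\<in>I. Y i \<omega>)}"
    using l by (auto simp: PY)
  hence "measure M {\<omega>\<in>space M. t \<le> (\<Sum>i\<in>I. g (X i \<omega>)) - real (card I) * e}
        \<le> (\<integral>\<omega>. (\<Prod>i\<in>I. Y i \<omega>) \<partial>M) / exp (l * t)"
  proof -
    have nn: "AE x in M. 0 \<le> (\<Prod>i\<in>I. Y i x)" by (auto simp: Y_def intro!: prod_nonneg)
    have "measure M {\<omega>\<in>space M. exp (l * t) \<le> (\<Prod>i\<in>I. Y i \<omega>)}
        \<le> (\<integral>\<omega>. (\<Prod>i\<in>I. Y i \<omega>) \<partial>M) / exp (l * t)"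
      by (rule integral_Markov_inequality_measure[OF intP _ nn]) auto
    thus ?thesis using \<open>{\<omega>\<in>space M. t \<le> (\<Sum>i\<in>I. g (X i \<omega>)) - real (card I) * e}
        = {\<omega>\<in>space M. exp (l * t) \<le> (\<Prod>i\<in>I. Y i \<omega>)}\<close> by simp
  qed
  also have "\<dots> \<le> exp (real (card I) * l\<^sup>2 * V) / exp (l * t)"
    by (rule divide_right_mono[OF EPle]) simp
  also have "\<dots> = exp (- l * t + real (card I) * l\<^sup>2 * V)"
    by (simp add: exp_diff[symmetric])
  finally show ?thesis by (simp add: e_def)
qed

lemma quantile:
  assumes RD: "real_distribution \<nu>" and q: "0 < q" "q < 1"
  shows "\<exists>r. (\<forall>x. q \<le> cdf \<nu> x \<longleftrightarrow> r \<le> x) \<and> measure \<nu> {..<r} \<le> q"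
proof -
  interpret real_distribution \<nu> by fact
  define S where "S = {t. q \<le> cdf \<nu> t}"
  have "eventually (\<lambda>t. q < cdf \<nu> t) at_top"
    by (rule order_tendstoD(1)[OF cdf_lim_at_top_prob q(2)])
  then obtain t0 where "q < cdf \<nu> t0" by (auto simp: eventually_at_top_linorder)
  hence ne: "S \<noteq> {}" by (auto simp: S_def intro!: exI[of _ t0])
  have "eventually (\<lambda>t. cdf \<nu> t < q) at_bot"
    by (rule order_tendstoD(2)[OF cdf_lim_at_bot q(1)])
  then obtain t1 where t1: "\<And>t. t \<le> t1 \<Longrightarrow> cdf \<nu> t < q" by (auto simp: eventually_at_bot_linorder)
  have bdd: "bdd_below S"
  proof (rule bdd_belowI[of _ t1])
    fix s assume "s \<in> S"
    thus "t1 \<le> s" using t1[of s] by (force simp: S_def)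
  qed
  define r where "r = Inf S"
  have lower: "r \<le> x" if "x \<in> S" for x using cInf_lower[OF that bdd] by (simp add: r_def)
  have cr: "q \<le> cdf \<nu> r"
  proof (rule tendsto_lowerbound)
    show "(cdf \<nu> \<longlongrightarrow> cdf \<nu> r) (at_right r)"
      using cdf_is_right_cont[of r] by (simp add: continuous_within)
    show "eventually (\<lambda>t. q \<le> cdf \<nu> t) (at_right r)"
    proof (rule eventually_at_right_less[THEN eventually_mono])
      fix t assume "r < t"
      then obtain s where "s \<in> S" "s < t" using cInf_less_iff[OF ne bdd] by (auto simp: r_def)
      thus "q \<le> cdf \<nu> t" using cdf_nondecreasing[of s t] by (auto simp: S_def)
    qed
  qed simp
  have iff: "q \<le> cdf \<nu> x \<longleftrightarrow> r \<le> x" for x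
    using lower[of x] cr cdf_nondecreasing[of r x] by (auto simp: S_def)
  have "measure \<nu> {..<r} \<le> q"
  proof (rule tendsto_upperbound)
    show "(cdf \<nu> \<longlongrightarrow> measure \<nu> {..<r}) (at_left r)" by (rule cdf_at_left)
    show "eventually (\<lambda>t. cdf \<nu> t \<le> q) (at_left r)"
    proof (rule eventually_at_left_real[of "r - 1" r, THEN eventually_mono])
      fix t assume "t \<in> {r - 1<..<r}"
      thus "cdf \<nu> t \<le> q" using iff[of t] by auto
    qed simp
  qed simp
  with iff show ?thesis by blast
qed

lemma bracket1:
  assumes RD: "real_distribution \<nu>" and M: "2 \<le> M"
  shows "\<exists>H. finite H \<and> card H \<le> 2 * M \<and> H \<subseteq> sets borel \<and>
     (\<forall>x. \<exists>L\<in>H. \<exists>U\<in>H. L \<subseteq> {..x} \<and> {..x} \<subseteq> U \<and> measure \<nu> (U - L) \<le> 1 / real M)"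
proof -
  interpret real_distribution \<nu> by fact
  have "\<forall>l\<in>{1..M-1}. \<exists>r. (\<forall>x. real l / real M \<le> cdf \<nu> x \<longleftrightarrow> r \<le> x) \<and> measure \<nu> {..<r} \<le> real l / real M"
  proof
    fix l assume l: "l \<in> {1..M-1}"
    show "\<exists>r. (\<forall>x. real l / real M \<le> cdf \<nu> x \<longleftrightarrow> r \<le> x) \<and> measure \<nu> {..<r} \<le> real l / real M"
      by (rule quantile[OF RD]) (use l M in auto)
  qed
  then obtain r where r: "\<And>l x. l \<in> {1..M-1} \<Longrightarrow> real l / real M \<le> cdf \<nu> x \<longleftrightarrow> r l \<le> x"
    and rl: "\<And>l. l \<in> {1..M-1} \<Longrightarrow> measure \<nu> {..<r l} \<le> real l / real M"
    by metis
  define H where "H = {{}, UNIV} \<union> (\<lambda>l. {..r l}) ` {1..M-1} \<union> (\<lambda>l. {..<r l}) ` {1..M-1}"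
  have fin: "finite H" by (simp add: H_def)
  have "card H \<le> card {{}, UNIV::real set} + card ((\<lambda>l. {..r l}) ` {1..M-1}) + card ((\<lambda>l. {..<r l}) ` {1..M-1})"
    unfolding H_def by (meson card_Un_le add_le_mono order_trans le_refl)
  also have "\<dots> \<le> 2 + (M - 1) + (M - 1)"
    by (intro add_mono card_image_le[THEN order_trans]) (auto simp: card_insert_le_m1)
  finally have card: "card H \<le> 2 * M" using M by linarith
  have sets: "H \<subseteq> sets borel" by (auto simp: H_def)
  have br: "\<exists>L\<in>H. \<exists>U\<in>H. L \<subseteq> {..x} \<and> {..x} \<subseteq> U \<and> measure \<nu> (U - L) \<le> 1 / real M" for x
  proof -
    define c where "c = cdf \<nu> x"
    have c01: "0 \<le> c" "c \<le> 1" using cdf_nonneg cdf_bounded_prob by (auto simp: c_def)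
    define l where "l = min (M - 1) (nat \<lfloor>real M * c\<rfloor>)"
    have lM: "l \<le> M - 1" by (simp add: l_def)
    have l_le: "real l \<le> real M * c"
    proof -
      have "real (nat \<lfloor>real M * c\<rfloor>) \<le> real M * c" using c01 by simp
      thus ?thesis unfolding l_def by linarith
    qed
    have l_lt: "real M * c < real l + 1" if "l < M - 1"
    proof -
      have "l = nat \<lfloor>real M * c\<rfloor>" using that by (auto simp: l_def)
      thus ?thesis using c01 by linarith
    qed
    define L where "L = (if l = 0 then {} else {..r l})"
    define U where "U = (if l = M - 1 then UNIV else {..<r (l+1)})"
    have LH: "L \<in> H" using lM by (auto simp: L_def H_def)
    have UH: "U \<in> H" using lM by (auto simp: U_def H_def)
    have Lx: "L \<subseteq> {..x}"
    proof (cases "l = 0")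
      case False
      hence "l \<in> {1..M-1}" using lM by auto
      moreover have "real l / real M \<le> cdf \<nu> x" using l_le M by (simp add: c_def pos_divide_le_eq mult.commute)
      ultimately have "r l \<le> x" using r by blast
      thus ?thesis by (auto simp: L_def)
    qed (simp add: L_def)
    have xU: "{..x} \<subseteq> U"
    proof (cases "l = M - 1")
      case False
      hence l1: "l + 1 \<in> {1..M-1}" using lM by auto
      have "l < M - 1" using False lM by linarith
      hence "c * real M < real l + 1" using l_lt by (simp add: mult.commute)
      hence "c < (real l + 1) / real M" using M by (simp add: pos_less_divide_eq)
      hence "cdf \<nu> x < real (l+1) / real M" by (simp add: c_def add.commute)
      hence "\<not> r (l+1) \<le> x" using r[OF l1, of x] by linarith
      thus ?thesis by (auto simp: U_def)
    qed (simp add: U_def)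
    have LU: "L \<subseteq> U" using Lx xU by blast
    have mU: "measure \<nu> U \<le> (real l + 1) / real M"
    proof (cases "l = M - 1")
      case True
      have "real l + 1 = real M" using M True by linarith
      hence e1: "(real l + 1) / real M = 1" using M by simp
      have "U = space \<nu>" using True by (simp add: U_def)
      hence "measure \<nu> U = 1" using prob_space by simp
      thus ?thesis using e1 by simp
    next
      case False
      hence l1: "l + 1 \<in> {1..M-1}" using lM by auto
      have "U = {..<r (l+1)}" using False by (simp add: U_def)
      thus ?thesis using rl[OF l1] by (simp add: add.commute)
    qed
    have mL: "real l / real M \<le> measure \<nu> L"
    proof (cases "l = 0")
      case False
      hence l1: "l \<in> {1..M-1}" using lM by auto
      have "real l / real M \<le> cdf \<nu> (r l)" using r[OF l1, of "r l"] by simp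
      moreover have "L = {..r l}" using False by (simp add: L_def)
      ultimately show ?thesis by (simp add: cdf_def)
    qed (simp add: L_def)
    have "measure \<nu> (U - L) = measure \<nu> U - measure \<nu> L"
      by (rule finite_measure_Diff) (use LU LH UH sets in blast)+
    also have "\<dots> \<le> (real l + 1) / real M - real l / real M" using mU mL by linarith
    also have "\<dots> = 1 / real M" by (simp add: diff_divide_distrib[symmetric])
    finally show ?thesis using LH UH Lx xU by blast
  qed
  show ?thesis using fin card sets br by blast
qed

definition orth :: "real^'d::finite \<Rightarrow> (real^'d) set" where
  "orth a = {y. \<forall>j. y$j \<le> a$j}"

definition boxs :: "('d::finite \<Rightarrow> real set) \<Rightarrow> (real^'d) set" where
  "boxs A = {y. \<forall>j. y$j \<in> A j}"

lemma vec_nth_borel[measurable]: "(\<lambda>y::real^'d::finite. y$j) \<in> borel_measurable borel"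
  by (intro borel_measurable_continuous_onI continuous_intros)

lemma boxs_borel:
  assumes "\<And>j. A j \<in> sets borel" shows "boxs (A :: 'd::finite \<Rightarrow> real set) \<in> sets borel"
proof -
  have "boxs A = (\<Inter>j. (\<lambda>y::real^'d. y$j) -` A j \<inter> space borel)" by (auto simp: boxs_def)
  also have "\<dots> \<in> sets borel"
    using measurable_sets_borel[OF vec_nth_borel assms] by (intro sets.countable_INT') auto
  finally show ?thesis .
qed

lemma orth_boxs: "orth a = boxs (\<lambda>j. {..a$j})" by (auto simp: orth_def boxs_def)

lemma orth_borel[measurable]: "orth a \<in> sets borel"
  unfolding orth_boxs by (rule boxs_borel) auto

lemma bracket_vec:
  fixes \<mu> :: "(real^'d::finite) measure"
  assumes PS: "prob_space \<mu>" and S: "sets \<mu> = sets borel" and M: "2 \<le> M"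
  shows "\<exists>H. (\<forall>j. finite (H j) \<and> card (H j) \<le> 2*M \<and> H j \<subseteq> sets borel) \<and>
     (\<forall>x. \<exists>A B. (\<forall>j. A j \<in> H j \<and> B j \<in> H j) \<and> boxs A \<subseteq> orth x \<and> orth x \<subseteq> boxs B
        \<and> measure \<mu> (boxs B - boxs A) \<le> real CARD('d) / real M)"
proof -
  interpret prob_space \<mu> by fact
  have sp: "space \<mu> = UNIV" using sets_eq_imp_space_eq[OF S] by simp
  define \<nu> where "\<nu> j = distr \<mu> borel (\<lambda>y. y$j)" for j
  have rvj: "(\<lambda>y::real^'d. y$j) \<in> borel_measurable \<mu>" for j
    using vec_nth_borel[of j] by (subst measurable_cong_sets[OF S refl])
  have RD: "real_distribution (\<nu> j)" for j unfolding \<nu>_def by (rule real_distribution_distr[OF rvj])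
  have "\<forall>j. \<exists>H. finite H \<and> card H \<le> 2 * M \<and> H \<subseteq> sets borel \<and>
     (\<forall>x. \<exists>L\<in>H. \<exists>U\<in>H. L \<subseteq> {..x} \<and> {..x} \<subseteq> U \<and> measure (\<nu> j) (U - L) \<le> 1 / real M)"
    using bracket1[OF RD M] by blast
  then obtain H where H: "\<And>j. finite (H j) \<and> card (H j) \<le> 2 * M \<and> H j \<subseteq> sets borel"
    and Hb: "\<And>j x. \<exists>L\<in>H j. \<exists>U\<in>H j. L \<subseteq> {..x} \<and> {..x} \<subseteq> U \<and> measure (\<nu> j) (U - L) \<le> 1 / real M"
    by metis
  have "\<exists>A B. (\<forall>j. A j \<in> H j \<and> B j \<in> H j) \<and> boxs A \<subseteq> orth x \<and> orth x \<subseteq> boxs B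
        \<and> measure \<mu> (boxs B - boxs A) \<le> real CARD('d) / real M" for x
  proof -
    have "\<forall>j. \<exists>L U. L \<in> H j \<and> U \<in> H j \<and> L \<subseteq> {..x$j} \<and> {..x$j} \<subseteq> U \<and> measure (\<nu> j) (U - L) \<le> 1 / real M"
      using Hb by blast
    then obtain A B where AB: "\<And>j. A j \<in> H j \<and> B j \<in> H j \<and> A j \<subseteq> {..x$j} \<and> {..x$j} \<subseteq> B j
       \<and> measure (\<nu> j) (B j - A j) \<le> 1 / real M"
      by metis
    have sub1: "boxs A \<subseteq> orth x" using AB by (fastforce simp: boxs_def orth_def)
    have sub2: "orth x \<subseteq> boxs B" using AB by (fastforce simp: boxs_def orth_def)
    have bor: "A j \<in> sets borel" "B j \<in> sets borel" for j using AB H by blast+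
    have "boxs B - boxs A \<subseteq> (\<Union>j\<in>UNIV. (\<lambda>y. y$j) -` (B j - A j))" by (auto simp: boxs_def)
    hence "measure \<mu> (boxs B - boxs A) \<le> measure \<mu> (\<Union>j\<in>UNIV. (\<lambda>y. y$j) -` (B j - A j))"
      by (intro finite_measure_mono) (use S bor in \<open>auto intro!: measurable_sets_borel[OF vec_nth_borel]\<close>)
    also have "\<dots> \<le> (\<Sum>j\<in>UNIV. measure \<mu> ((\<lambda>y. y$j) -` (B j - A j)))"
      by (intro measure_UNION_le) (use S bor in \<open>auto intro!: measurable_sets_borel[OF vec_nth_borel]\<close>)
    also have "\<dots> \<le> (\<Sum>j\<in>(UNIV::'d set). 1 / real M)"
    proof (rule sum_mono)
      fix j
      have "measure (\<nu> j) (B j - A j) = measure \<mu> ((\<lambda>y. y$j) -` (B j - A j) \<inter> space \<mu>)"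
        unfolding \<nu>_def by (rule measure_distr[OF rvj]) (use bor in auto)
      thus "measure \<mu> ((\<lambda>y. y$j) -` (B j - A j)) \<le> 1 / real M" using AB[of j] sp by simp
    qed
    also have "\<dots> = real CARD('d) / real M" by simp
    finally show ?thesis using AB sub1 sub2 by blast
  qed
  thus ?thesis using H by blast
qed

lemma orth_diff_le:
  fixes \<mu> :: "(real^'d::finite) measure"
  assumes FM: "finite_measure \<mu>" and S: "sets \<mu> = sets borel"
    and Lip: "L-lipschitz_on simplexS (cdfv \<mu>)"
    and a: "a \<in> simplexS" and x: "x \<in> simplexS" and h: "\<forall>j. \<bar>a$j - x$j\<bar> \<le> h"
  shows "measure \<mu> (orth a - orth x) \<le> L * (real CARD('d) * h)"
proof -
  interpret finite_measure \<mu> by fact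
  define u where "u = (\<chi> j. min (x$j) (a$j))"
  have e1: "orth a - orth x = orth a - orth u" by (auto simp: orth_def u_def)
  have sub: "orth u \<subseteq> orth a" by (auto simp: orth_def u_def)
  have m1: "measure \<mu> (orth a - orth u) = cdfv \<mu> a - cdfv \<mu> u"
    unfolding cdfv_def orth_def[symmetric]
    by (rule finite_measure_Diff) (use S sub in auto)
  have u: "u \<in> simplexS"
  proof -
    have "\<bar>u$j\<bar> \<le> \<bar>x$j\<bar>" "0 \<le> u$j" "u$j \<le> 1" for j
      using x a by (auto simp: u_def simplexS_def min_def)
    moreover have "(\<Sum>j\<in>UNIV. \<bar>u$j\<bar>) \<le> (\<Sum>j\<in>UNIV. \<bar>x$j\<bar>)"
      by (rule sum_mono) (use calculation in auto)
    ultimately show ?thesis using x by (auto simp: simplexS_def)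
  qed
  have "cdfv \<mu> a - cdfv \<mu> u \<le> dist (cdfv \<mu> a) (cdfv \<mu> u)" by (simp add: dist_real_def)
  also have "\<dots> \<le> L * dist a u" by (rule lipschitz_onD[OF Lip a u])
  also have "dist a u \<le> real CARD('d) * h"
  proof -
    have "dist a u = norm (a - u)" by (simp add: dist_norm)
    also have "\<dots> \<le> (\<Sum>j\<in>UNIV. \<bar>(a - u)$j\<bar>)" by (rule norm_le_l1_cart)
    also have "\<dots> \<le> (\<Sum>j\<in>(UNIV::'d set). h)"
    proof (rule sum_mono)
      fix j show "\<bar>(a - u)$j\<bar> \<le> h" using h[rule_format, of j] by (auto simp: u_def)
    qed
    finally show ?thesis by simp
  qed
  hence "L * dist a u \<le> L * (real CARD('d) * h)"
    using lipschitz_on_nonneg[OF Lip] by (rule mult_left_mono)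
  finally show ?thesis using e1 m1 by simp
qed

lemma card_boole:
  assumes "finite I"
  shows "real (card {i\<in>I. P i}) = (\<Sum>i\<in>I. if P i then 1 else 0)"
proof -
  have "real (card {i\<in>I. P i}) = (\<Sum>i\<in>{i\<in>I. P i}. 1)" by simp
  also have "\<dots> = (\<Sum>i\<in>I. if P i then 1 else 0)" by (rule sum.inter_filter[OF assms])
  finally show ?thesis .
qed

lemma empcdf_sum:
  "real n * empcdf X n \<omega> z = (\<Sum>i\<in>{1..n}. indicator (orth z) (X i \<omega>))" 
proof (cases "n = 0")
  case False
  have "real (card {i\<in>{1..n}. \<forall>j. X i \<omega> $ j \<le> z $ j}) = (\<Sum>i\<in>{1..n}. indicator (orth z) (X i \<omega>))"
  proof -
    have "real (card {i\<in>{1..n}. \<forall>j. X i \<omega> $ j \<le> z $ j}) = (\<Sum>i\<in>{1..n}. if (\<forall>j. X i \<omega> $ j \<le> z $ j) then 1 else 0)"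
      by (rule card_boole) simp
    also have "\<dots> = (\<Sum>i\<in>{1..n}. indicator (orth z) (X i \<omega>))"
      by (rule sum.cong) (auto simp: orth_def indicator_def)
    finally show ?thesis .
  qed
  thus ?thesis using False by (simp add: empcdf_def)
qed simp

lemma ln_ge1: assumes "3 \<le> (n::nat)" shows "1 \<le> ln (real n)"
proof -
  have "exp 1 \<le> (3::real)" using exp_bound[of 1] by simp
  also have "\<dots> \<le> real n" using assms by simp
  finally show ?thesis using assms by (subst ln_ge_iff) auto
qed

lemma alpha_sq: "(alpha n)\<^sup>2 = ln (real n) / real n"
proof (cases "n = 0")
  case False
  hence "0 \<le> ln (real n) / real n" by simp
  thus ?thesis by (simp add: alpha_def)
qed (simp add: alpha_def)

lemma alpha_pos: assumes "2 \<le> n" shows "0 < alpha n"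
  using assms by (simp add: alpha_def)

lemma m_bound:
  assumes m: "2 \<le> m" and n: "3 \<le> n" and b: "beta n m \<le> alpha m"
  shows "real m \<le> 4 * real n ^ 4"
proof -
  have am: "0 < alpha m" by (rule alpha_pos[OF m])
  have an: "0 < alpha n" by (rule alpha_pos) (use n in auto)
  have sq: "sqrt (alpha m) * sqrt (alpha m) = alpha m" using am by simp
  have "alpha n * sqrt (alpha m) \<le> sqrt (alpha m) * sqrt (alpha m)"
    using b sq by (simp add: beta_def)
  moreover have sp: "0 < sqrt (alpha m)" using am by simp
  ultimately have "alpha n \<le> sqrt (alpha m)" by (rule mult_right_le_imp_le)
  hence "(alpha n)\<^sup>2 \<le> (sqrt (alpha m))\<^sup>2" by (rule power_mono) (use an in linarith)
  moreover have "(sqrt (alpha m))\<^sup>2 = alpha m" using am by simp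
  moreover have "(alpha n)\<^sup>2 = ln (real n) / real n" by (rule alpha_sq)
  ultimately have a1: "ln (real n) / real n \<le> alpha m" by linarith
  have "ln (sqrt (real m)) \<le> sqrt (real m) - 1" by (rule ln_le_minus_one) (use m in auto)
  moreover have "ln (sqrt (real m)) = ln (real m) / 2" using m by (simp add: ln_sqrt)
  ultimately have lm: "ln (real m) \<le> 2 * sqrt (real m)" by linarith
  have sm: "sqrt (real m) * sqrt (real m) = real m" by simp
  have smpos: "0 < sqrt (real m)" using m by simp
  have "(alpha m)\<^sup>2 = ln (real m) / real m" by (rule alpha_sq)
  also have "\<dots> \<le> 2 * sqrt (real m) / real m" using lm m by (intro divide_right_mono) auto
  also have "\<dots> = 2 / sqrt (real m)"
    using smpos m by (simp add: field_simps)
  finally have a2: "(alpha m)\<^sup>2 \<le> 2 / sqrt (real m)" .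
  have "1 / real n \<le> ln (real n) / real n" using ln_ge1[OF n] n by (intro divide_right_mono) auto
  also have "\<dots> \<le> alpha m" by (rule a1)
  finally have "(1 / real n)\<^sup>2 \<le> (alpha m)\<^sup>2" using n by (intro power_mono) auto
  with a2 have "1 / (real n)\<^sup>2 \<le> 2 / sqrt (real m)" by (simp add: power_divide)
  moreover have "\<And>a b::real. 0 < a \<Longrightarrow> 0 < b \<Longrightarrow> 1 / a \<le> 2 / b \<Longrightarrow> b \<le> 2 * a"
    by (simp add: divide_le_eq le_divide_eq mult.commute)
  ultimately have "sqrt (real m) \<le> 2 * (real n)\<^sup>2" using smpos n by simp
  hence "(sqrt (real m))\<^sup>2 \<le> (2 * (real n)\<^sup>2)\<^sup>2" using smpos by (intro power_mono) auto
  moreover have "(sqrt (real m))\<^sup>2 = real m" by simp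
  moreover have "(2 * (real n)\<^sup>2)\<^sup>2 = 4 * real n ^ 4" by algebra
  ultimately show ?thesis by linarith
qed

lemma pair_tail:
  fixes M :: "'a measure" and \<mu> :: "'b::topological_space measure"
    and X :: "nat \<Rightarrow> 'a \<Rightarrow> 'b"
  assumes PM: "prob_space M"
    and indep: "prob_space.indep_vars M (\<lambda>_. borel) X UNIV"
    and distr: "\<And>i. distr M borel (X i) = \<mu>"
    and Xm[measurable]: "\<And>i. X i \<in> borel_measurable M"
    and B[measurable]: "B \<in> sets borel" and Q[measurable]: "Q \<in> sets borel"
    and V: "measure \<mu> ((B - Q) \<union> (Q - B)) \<le> V"
    and l: "0 < l" "l \<le> 1"
  shows "measure M {\<omega>\<in>space M. t \<le> \<bar>(\<Sum>i\<in>{1..n}. indicator B (X i \<omega>) - indicator Q (X i \<omega>))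
            - real n * (measure \<mu> B - measure \<mu> Q)\<bar>} \<le> 2 * exp (- l * t + real n * l\<^sup>2 * V)"
proof -
  interpret prob_space M by fact
  have Pmu: "prob_space \<mu>" using distr[of 0] prob_space_distr[OF Xm[of 0]] by simp
  interpret mu: prob_space \<mu> by fact
  have smu: "sets \<mu> = sets borel" using distr[of 0] by (metis sets_distr)
  define g where "g y = (indicator B y - indicator Q y :: real)" for y
  have gm: "g \<in> borel_measurable borel" unfolding g_def by measurable
  have gb: "\<bar>g y\<bar> \<le> 1" for y by (auto simp: g_def indicator_def)
  have ngm: "(\<lambda>y. - g y) \<in> borel_measurable borel" using gm by measurable
  have ngb: "\<bar>- g y\<bar> \<le> 1" for y using gb[of y] by simp
  have Bmu: "B \<in> sets \<mu>" "Q \<in> sets \<mu>" "(B - Q) \<union> (Q - B) \<in> sets \<mu>" using smu by auto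
  have g2: "(g y)\<^sup>2 = indicator ((B - Q) \<union> (Q - B)) y" for y by (auto simp: g_def indicator_def)
  have int2: "(\<integral>y. (g y)\<^sup>2 \<partial>\<mu>) \<le> V"
    using V Bmu by (simp add: g2)
  have int2': "(\<integral>y. (- g y)\<^sup>2 \<partial>\<mu>) \<le> V" using int2 by simp
  have int1: "(\<integral>y. g y \<partial>\<mu>) = measure \<mu> B - measure \<mu> Q"
    unfolding g_def using Bmu by (subst Bochner_Integration.integral_diff) (auto intro!: integrable_real_indicator simp: mu.emeasure_eq_measure)
  have int1': "(\<integral>y. - g y \<partial>\<mu>) = - (measure \<mu> B - measure \<mu> Q)" using int1 by simp
  have Sg: "(\<Sum>i\<in>{1..n}. g (X i \<omega>)) = (\<Sum>i\<in>{1..n}. indicator B (X i \<omega>) - indicator Q (X i \<omega>))" for \<omega>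
    by (simp add: g_def)
  have Sng: "(\<Sum>i\<in>{1..n}. - g (X i \<omega>)) = - (\<Sum>i\<in>{1..n}. g (X i \<omega>))" for \<omega>
    by (simp add: sum_negf)
  have cn: "real (card {1..n}) = real n" by simp
  have absD: "\<And>a::real. t \<le> \<bar>a\<bar> \<Longrightarrow> t \<le> a \<or> t \<le> - a" by (auto simp: abs_if split: if_splits)
  have "{\<omega>\<in>space M. t \<le> \<bar>(\<Sum>i\<in>{1..n}. indicator B (X i \<omega>) - indicator Q (X i \<omega>))
            - real n * (measure \<mu> B - measure \<mu> Q)\<bar>}
       \<subseteq> {\<omega>\<in>space M. t \<le> (\<Sum>i\<in>{1..n}. g (X i \<omega>)) - real (card {1..n}) * (\<integral>y. g y \<partial>\<mu>)}
         \<union> {\<omega>\<in>space M. t \<le> (\<Sum>i\<in>{1..n}. - g (X i \<omega>)) - real (card {1..n}) * (\<integral>y. - g y \<partial>\<mu>)}"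
  proof
    fix \<omega> assume "\<omega> \<in> {\<omega>\<in>space M. t \<le> \<bar>(\<Sum>i\<in>{1..n}. indicator B (X i \<omega>) - indicator Q (X i \<omega>))
            - real n * (measure \<mu> B - measure \<mu> Q)\<bar>}"
    hence om: "\<omega> \<in> space M" and tt: "t \<le> \<bar>(\<Sum>i\<in>{1..n}. indicator B (X i \<omega>) - indicator Q (X i \<omega>))
            - real n * (measure \<mu> B - measure \<mu> Q)\<bar>" by auto
    have "t \<le> \<bar>(\<Sum>i\<in>{1..n}. g (X i \<omega>)) - real (card {1..n}) * (\<integral>y. g y \<partial>\<mu>)\<bar>"
      using tt by (simp only: Sg int1 cn)
    from absD[OF this]
    have "t \<le> (\<Sum>i\<in>{1..n}. g (X i \<omega>)) - real (card {1..n}) * (\<integral>y. g y \<partial>\<mu>) \<or>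
          t \<le> (\<Sum>i\<in>{1..n}. - g (X i \<omega>)) - real (card {1..n}) * (\<integral>y. - g y \<partial>\<mu>)"
      by (simp only: Sng int1 int1') linarith
    thus "\<omega> \<in> {\<omega>\<in>space M. t \<le> (\<Sum>i\<in>{1..n}. g (X i \<omega>)) - real (card {1..n}) * (\<integral>y. g y \<partial>\<mu>)}
         \<union> {\<omega>\<in>space M. t \<le> (\<Sum>i\<in>{1..n}. - g (X i \<omega>)) - real (card {1..n}) * (\<integral>y. - g y \<partial>\<mu>)}"
      using om by blast
  qed
  hence "measure M {\<omega>\<in>space M. t \<le> \<bar>(\<Sum>i\<in>{1..n}. indicator B (X i \<omega>) - indicator Q (X i \<omega>))
            - real n * (measure \<mu> B - measure \<mu> Q)\<bar>}
       \<le> measure M ({\<omega>\<in>space M. t \<le> (\<Sum>i\<in>{1..n}. g (X i \<omega>)) - real (card {1..n}) * (\<integral>y. g y \<partial>\<mu>)}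
         \<union> {\<omega>\<in>space M. t \<le> (\<Sum>i\<in>{1..n}. - g (X i \<omega>)) - real (card {1..n}) * (\<integral>y. - g y \<partial>\<mu>)})"
    by (intro finite_measure_mono) (use gm in measurable)
  also have "\<dots> \<le> measure M {\<omega>\<in>space M. t \<le> (\<Sum>i\<in>{1..n}. g (X i \<omega>)) - real (card {1..n}) * (\<integral>y. g y \<partial>\<mu>)}
         + measure M {\<omega>\<in>space M. t \<le> (\<Sum>i\<in>{1..n}. - g (X i \<omega>)) - real (card {1..n}) * (\<integral>y. - g y \<partial>\<mu>)}"
    by (intro measure_Un_le) (use gm in measurable)
  also have "\<dots> \<le> exp (- l * t + real (card {1..n}) * l\<^sup>2 * V) + exp (- l * t + real (card {1..n}) * l\<^sup>2 * V)"
    by (intro add_mono tail_one[OF PM indep distr Xm gm gb l int2] 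
        tail_one[OF PM indep distr Xm ngm ngb l int2']) auto
  finally show ?thesis by simp
qed

lemma var_pair:
  fixes \<mu> :: "(real^'d::finite) measure"
  assumes FM: "finite_measure \<mu>" and smu: "sets \<mu> = sets borel"
    and PA: "PA \<in> sets borel" and PB: "PB \<in> sets borel"
    and sub: "PA \<subseteq> orth x" "orth x \<subseteq> PB" and gap: "measure \<mu> (PB - PA) \<le> G"
    and v1: "measure \<mu> (orth a - orth x) \<le> W" and v2: "measure \<mu> (orth x - orth a) \<le> W"
  shows "measure \<mu> ((PB - orth a) \<union> (orth a - PB)) \<le> G + 2 * W"
    and "measure \<mu> ((PA - orth a) \<union> (orth a - PA)) \<le> G + 2 * W"
proof -
  interpret finite_measure \<mu> by fact
  have s: "PA \<in> sets \<mu>" "PB \<in> sets \<mu>" "orth a \<in> sets \<mu>" "orth x \<in> sets \<mu>"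
    using PA PB smu orth_borel by auto
  have U3: "measure \<mu> ((PB - PA) \<union> (orth x - orth a) \<union> (orth a - orth x)) \<le> G + 2 * W"
  proof -
    have "measure \<mu> ((PB - PA) \<union> (orth x - orth a) \<union> (orth a - orth x))
          \<le> measure \<mu> ((PB - PA) \<union> (orth x - orth a)) + measure \<mu> (orth a - orth x)"
      by (rule measure_Un_le) (use s in auto)
    also have "measure \<mu> ((PB - PA) \<union> (orth x - orth a)) \<le> measure \<mu> (PB - PA) + measure \<mu> (orth x - orth a)"
      by (rule measure_Un_le) (use s in auto)
    finally show ?thesis using gap v1 v2 by linarith
  qed
  have "measure \<mu> ((PB - orth a) \<union> (orth a - PB)) \<le> measure \<mu> ((PB - PA) \<union> (orth x - orth a) \<union> (orth a - orth x))"
    by (rule finite_measure_mono) (use s sub in auto)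
  thus "measure \<mu> ((PB - orth a) \<union> (orth a - PB)) \<le> G + 2 * W" using U3 by linarith
  have "measure \<mu> ((PA - orth a) \<union> (orth a - PA)) \<le> measure \<mu> ((PB - PA) \<union> (orth x - orth a) \<union> (orth a - orth x))"
    by (rule finite_measure_mono) (use s sub in auto)
  thus "measure \<mu> ((PA - orth a) \<union> (orth a - PA)) \<le> G + 2 * W" using U3 by linarith
qed

lemma det_step:
  fixes \<mu> :: "(real^'d::finite) measure" and X :: "nat \<Rightarrow> 'a \<Rightarrow> real^'d"
  assumes FM: "finite_measure \<mu>" and smu: "sets \<mu> = sets borel"
    and PA: "PA \<in> sets borel" and PB: "PB \<in> sets borel"
    and sub: "PA \<subseteq> orth x" "orth x \<subseteq> PB" and gap: "measure \<mu> (PB - PA) \<le> G"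
    and n: "0 < n"
    and gA: "\<bar>(\<Sum>i\<in>{1..n}. indicator PA (X i \<omega>) - indicator (orth a) (X i \<omega>))
               - real n * (measure \<mu> PA - measure \<mu> (orth a))\<bar> < T"
    and gB: "\<bar>(\<Sum>i\<in>{1..n}. indicator PB (X i \<omega>) - indicator (orth a) (X i \<omega>))
               - real n * (measure \<mu> PB - measure \<mu> (orth a))\<bar> < T"
  shows "\<bar>empcdf X n \<omega> a - cdfv \<mu> a - empcdf X n \<omega> x + cdfv \<mu> x\<bar> \<le> T / real n + G"
proof -
  interpret finite_measure \<mu> by fact
  have s: "PA \<in> sets \<mu>" "PB \<in> sets \<mu>" "orth a \<in> sets \<mu>" "orth x \<in> sets \<mu>"
    using PA PB smu orth_borel by auto
  define SA where "SA = (\<Sum>i\<in>{1..n}. indicator PA (X i \<omega>) :: real)"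
  define SB where "SB = (\<Sum>i\<in>{1..n}. indicator PB (X i \<omega>) :: real)"
  define Sa where "Sa = (\<Sum>i\<in>{1..n}. indicator (orth a) (X i \<omega>) :: real)"
  define Sx where "Sx = (\<Sum>i\<in>{1..n}. indicator (orth x) (X i \<omega>) :: real)"
  have gA': "\<bar>SA - Sa - real n * (measure \<mu> PA - measure \<mu> (orth a))\<bar> < T"
    using gA by (simp add: SA_def Sa_def sum_subtractf)
  have gB': "\<bar>SB - Sa - real n * (measure \<mu> PB - measure \<mu> (orth a))\<bar> < T"
    using gB by (simp add: SB_def Sa_def sum_subtractf)
  have SAx: "SA \<le> Sx" unfolding SA_def Sx_def
    by (rule sum_mono) (use sub in \<open>auto simp: indicator_def\<close>)
  have SxB: "Sx \<le> SB" unfolding SB_def Sx_def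
    by (rule sum_mono) (use sub in \<open>auto simp: indicator_def\<close>)
  have mAx: "measure \<mu> PA \<le> measure \<mu> (orth x)" by (rule finite_measure_mono) (use sub s in auto)
  have mxB: "measure \<mu> (orth x) \<le> measure \<mu> PB" by (rule finite_measure_mono) (use sub s in auto)
  have "measure \<mu> (PB - PA) = measure \<mu> PB - measure \<mu> PA"
    by (rule finite_measure_Diff) (use sub s in auto)
  hence mBA: "measure \<mu> PB - measure \<mu> PA \<le> G" using gap by simp
  have ea: "real n * empcdf X n \<omega> a = Sa" by (simp add: empcdf_sum Sa_def)
  have ex: "real n * empcdf X n \<omega> x = Sx" by (simp add: empcdf_sum Sx_def)
  have ca: "cdfv \<mu> a = measure \<mu> (orth a)" by (simp add: cdfv_def orth_def)
  have cx: "cdfv \<mu> x = measure \<mu> (orth x)" by (simp add: cdfv_def orth_def)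
  define D where "D = empcdf X n \<omega> a - cdfv \<mu> a - empcdf X n \<omega> x + cdfv \<mu> x"
  have nD: "real n * D = Sa - real n * measure \<mu> (orth a) - Sx + real n * measure \<mu> (orth x)"
    unfolding D_def using ea ex ca cx by (simp add: algebra_simps)
  have nG: "real n * measure \<mu> PB - real n * measure \<mu> PA \<le> real n * G"
    using mBA n by (simp add: right_diff_distrib[symmetric])
  have nAx: "real n * measure \<mu> PA \<le> real n * measure \<mu> (orth x)" using mAx n by simp
  have nxB: "real n * measure \<mu> (orth x) \<le> real n * measure \<mu> PB" using mxB n by simp
  have up: "real n * D \<le> T + real n * G"
    using nD gA' SAx nG nAx nxB by (simp add: right_diff_distrib abs_less_iff)
  have lo: "- (T + real n * G) \<le> real n * D"
    using nD gB' SxB nG nAx nxB by (simp add: right_diff_distrib abs_less_iff)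
  have "\<bar>real n * D\<bar> \<le> T + real n * G" using up lo by linarith
  hence "real n * \<bar>D\<bar> \<le> T + real n * G" using n by (simp add: abs_mult)
  moreover have "real n * (T / real n + G) = T + real n * G" using n by (simp add: distrib_left)
  ultimately have "real n * \<bar>D\<bar> \<le> real n * (T / real n + G)" by simp
  hence "\<bar>D\<bar> \<le> T / real n + G" using n by (simp add: mult_le_cancel_left_pos)
  thus ?thesis by (simp add: D_def)
qed

lemma expo_calc:
  assumes n: "3 \<le> n" and m: "2 \<le> m"
  shows "(beta n m / alpha m) * (real n * C * beta n m) = C * ln (real n)"
    and "real n * (beta n m / alpha m)\<^sup>2 * (c * alpha m) = c * ln (real n)"
proof -
  have am: "0 < alpha m" by (rule alpha_pos[OF m])
  have b2: "(beta n m)\<^sup>2 = (alpha n)\<^sup>2 * alpha m"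
    using am by (simp add: beta_def power_mult_distrib)
  have na: "real n * (alpha n)\<^sup>2 = ln (real n)" using n by (simp add: alpha_sq)
  have "(beta n m / alpha m) * (real n * C * beta n m) = C * (real n * ((beta n m)\<^sup>2 / alpha m))"
    by (simp add: power2_eq_square)
  also have "(beta n m)\<^sup>2 / alpha m = (alpha n)\<^sup>2" using am b2 by simp
  finally show "(beta n m / alpha m) * (real n * C * beta n m) = C * ln (real n)" using na by simp
  have "real n * (beta n m / alpha m)\<^sup>2 * (c * alpha m) = c * (real n * ((beta n m)\<^sup>2 / alpha m))"
    using am by (simp add: power_divide power2_eq_square)
  also have "(beta n m)\<^sup>2 / alpha m = (alpha n)\<^sup>2" using am b2 by simp
  finally show "real n * (beta n m / alpha m)\<^sup>2 * (c * alpha m) = c * ln (real n)" using na by simp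
qed

lemma card_bound:
  assumes n: "3 \<le> n" and m: "2 \<le> m" and mb: "real m \<le> 4 * real n ^ 4"
  shows "real ((2 * m) ^ dd * (m + 1) ^ dd) \<le> real n ^ (12 * dd)"
proof -
  have "real (2 * m) * real (m + 1) \<le> real (2 * m) * real (2 * m)"
    using m by (intro mult_left_mono) auto
  also have "\<dots> = 4 * (real m)\<^sup>2" by (simp add: power2_eq_square)
  also have "\<dots> \<le> 4 * (4 * real n ^ 4)\<^sup>2" using mb by (intro mult_left_mono power_mono) auto
  also have "\<dots> = 64 * real n ^ 8" by (simp add: power2_eq_square)
  also have "\<dots> \<le> real n ^ 4 * real n ^ 8"
  proof -
    have "(3::real) ^ 4 \<le> real n ^ 4" using n by (intro power_mono) auto
    thus ?thesis by (intro mult_right_mono) auto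
  qed
  also have "\<dots> = real n ^ 12" by (simp flip: power_add)
  finally have h: "real (2 * m) * real (m + 1) \<le> real n ^ 12" .
  have "real ((2 * m) ^ dd * (m + 1) ^ dd) = (real (2 * m) * real (m + 1)) ^ dd"
    by (simp add: power_mult_distrib)
  also have "\<dots> \<le> (real n ^ 12) ^ dd" by (rule power_mono[OF h]) simp
  also have "\<dots> = real n ^ (12 * dd)" by (simp add: power_mult)
  finally show ?thesis .
qed

theorem lemma1:
  fixes M :: "'a measure" and \<mu> :: "(real^'d::finite) measure"
    and X :: "nat \<Rightarrow> 'a \<Rightarrow> real^'d" and m :: "nat \<Rightarrow> nat"
  assumes "prob_space M"
    and "prob_space.indep_vars M (\<lambda>_. borel) X UNIV"
    and "\<And>i. distr M borel (X i) = \<mu>"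
    and "\<And>i. X i \<in> borel_measurable M"
    and "measure \<mu> simplexS = 1"
    and "\<exists>L. L-lipschitz_on simplexS (cdfv \<mu>)"
    and "eventually (\<lambda>n. 2 \<le> m n \<and> 1 / real (m n) \<le> beta n (m n)
                          \<and> beta n (m n) \<le> alpha (m n)) sequentially"
  shows "AE \<omega> in M. \<exists>C. eventually (\<lambda>n. \<forall>x\<in>simplexInt. \<forall>k\<in>Nxm x (m n).
           \<bar>empcdf X n \<omega> (scalek k (m n)) - cdfv \<mu> (scalek k (m n))
             - empcdf X n \<omega> x + cdfv \<mu> x\<bar> \<le> C * beta n (m n)) sequentially"
proof -
  note PM = assms(1) and indep = assms(2) and distr = assms(3) and Xm[measurable] = assms(4)
  interpret prob_space M by fact
  have Pmu: "prob_space \<mu>" using distr[of 0] prob_space_distr[OF Xm[of 0]] by simp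
  interpret mu: prob_space \<mu> by fact
  have FM: "finite_measure \<mu>" by (rule mu.finite_measure_axioms)
  have smu: "sets \<mu> = sets borel" using distr[of 0] by (metis sets_distr)
  obtain L where Lip: "L-lipschitz_on simplexS (cdfv \<mu>)" using assms(6) by blast
  have L0: "0 \<le> L" by (rule lipschitz_on_nonneg[OF Lip])
  define dd where "dd = CARD('d)"
  define c0 where "c0 = real dd + 2 * L * real dd"
  define C1 where "C1 = c0 + 12 * real dd + 2"
  obtain N0 where N0: "\<And>n. N0 \<le> n \<Longrightarrow> 2 \<le> m n \<and> 1 / real (m n) \<le> beta n (m n) \<and> beta n (m n) \<le> alpha (m n)"
    using assms(7) unfolding eventually_sequentially by blast
  define N1 where "N1 = max N0 3"
  have "\<forall>n. \<exists>H. (\<forall>j. finite (H j) \<and> card (H j) \<le> 2 * max 2 (m n) \<and> H j \<subseteq> sets borel) \<and>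
     (\<forall>x. \<exists>A B. (\<forall>j. A j \<in> H j \<and> B j \<in> H j) \<and> boxs A \<subseteq> orth x \<and> orth x \<subseteq> boxs B
        \<and> measure \<mu> (boxs B - boxs A) \<le> real CARD('d) / real (max 2 (m n)))"
    using bracket_vec[OF Pmu smu] by simp
  then obtain Hf where Hf1: "\<And>n j. finite (Hf n j) \<and> card (Hf n j) \<le> 2 * max 2 (m n) \<and> Hf n j \<subseteq> sets borel"
    and Hf2: "\<And>n x. \<exists>A B. (\<forall>j. A j \<in> Hf n j \<and> B j \<in> Hf n j) \<and> boxs A \<subseteq> orth x \<and> orth x \<subseteq> boxs B
        \<and> measure \<mu> (boxs B - boxs A) \<le> real CARD('d) / real (max 2 (m n))"
    by metis
  define PF where "PF n = boxs ` (PiE UNIV (Hf n))" for n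
  define K where "K n = (\<lambda>f. vec_lambda f) ` (PiE UNIV (\<lambda>_::'d. {..m n}))" for n
  define Om :: "nat \<Rightarrow> nat^'d \<Rightarrow> (real^'d) set" where "Om n k = orth (scalek k (m n))" for n k
  define Qn where "Qn n = {p \<in> PF n \<times> K n. measure \<mu> ((fst p - Om n (snd p)) \<union> (Om n (snd p) - fst p))
                            \<le> c0 * alpha (m n)}" for n
  define T where "T n = real n * C1 * beta n (m n)" for n
  define Ev where "Ev n p = {\<omega>\<in>space M. T n \<le> \<bar>(\<Sum>i\<in>{1..n}. indicator (fst p) (X i \<omega>) - indicator (Om n (snd p)) (X i \<omega>))
            - real n * (measure \<mu> (fst p) - measure \<mu> (Om n (snd p)))\<bar>}" for n p
  define E where "E n = (if N1 \<le> n then (\<Union>p\<in>Qn n. Ev n p) else {})" for n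
  have PFb: "P \<in> sets borel" if Pin: "P \<in> PF n" for P n
  proof -
    obtain A where "A \<in> PiE UNIV (Hf n)" "P = boxs A" using Pin unfolding PF_def by blast
    thus ?thesis using Hf1 by (auto intro!: boxs_borel)
  qed
  have finPF: "finite (PF n)" for n unfolding PF_def using Hf1 by (auto intro!: finite_PiE)
  have finK: "finite (K n)" for n unfolding K_def by (auto intro!: finite_PiE)
  have Qsub: "Qn n \<subseteq> PF n \<times> K n" for n unfolding Qn_def by blast
  have finQ: "finite (Qn n)" for n using Qsub[of n] finPF[of n] finK[of n]
    by (meson finite_SigmaI finite_subset)
  have cardPF: "card (PF n) \<le> (2 * max 2 (m n)) ^ dd" for n
  proof -
    have "card (PF n) \<le> card (PiE (UNIV::'d set) (Hf n))" unfolding PF_def by (rule card_image_le) (use Hf1 in \<open>auto intro!: finite_PiE\<close>)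
    also have "\<dots> = (\<Prod>j\<in>UNIV. card (Hf n j))" by (simp add: card_PiE)
    also have "\<dots> \<le> (\<Prod>j\<in>(UNIV::'d set). 2 * max 2 (m n))" by (rule prod_mono) (use Hf1 in auto)
    also have "\<dots> = (2 * max 2 (m n)) ^ dd" by (simp add: dd_def)
    finally show ?thesis .
  qed
  have cardK: "card (K n) \<le> (m n + 1) ^ dd" for n
  proof -
    have "card (K n) \<le> card (PiE (UNIV::'d set) (\<lambda>_. {..m n}))" unfolding K_def by (rule card_image_le) (auto intro!: finite_PiE)
    also have "\<dots> = (m n + 1) ^ dd" by (simp add: card_PiE dd_def)
    finally show ?thesis .
  qed
  have Evs: "Ev n p \<in> sets M" if "fst p \<in> sets borel" for n p
  proof -
    have [measurable]: "fst p \<in> sets borel" "Om n (snd p) \<in> sets borel" using that by (auto simp: Om_def)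
    show ?thesis unfolding Ev_def by measurable
  qed
  have Es: "E n \<in> sets M" for n
    unfolding E_def using Evs finQ PFb by (auto simp: Qn_def intro!: sets.finite_UN)
  have EvQ: "Ev n p \<in> sets M" if pq: "p \<in> Qn n" for n p
  proof -
    have "p \<in> PF n \<times> K n" using pq Qsub by blast
    hence "fst p \<in> PF n" by auto
    thus ?thesis by (intro Evs PFb)
  qed
  have cond: "2 \<le> m n" "1 / real (m n) \<le> beta n (m n)" "beta n (m n) \<le> alpha (m n)" "3 \<le> n"
    if nN: "N1 \<le> n" for n
    using N0[of n] nN by (auto simp: N1_def)
  have Ebound: "measure M (E n) \<le> 2 * inverse (real n ^ 2)" if nN: "N1 \<le> n" for n
  proof -
    note c = cond[OF nN]
    define l where "l = beta n (m n) / alpha (m n)"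
    have am: "0 < alpha (m n)" using alpha_pos c(1) by blast
    have mpos: "0 < 1 / real (m n)" using c(1) by simp
    have bpos: "0 < beta n (m n)" using mpos c(2) by linarith
    have l: "0 < l" "l \<le> 1" using am bpos c(3) by (auto simp: l_def)
    define k where "k = 12 * dd + 2"
    have ex: "- l * T n + real n * l\<^sup>2 * (c0 * alpha (m n)) = - real k * ln (real n)"
    proof -
      have "l * T n = C1 * ln (real n)" unfolding l_def T_def by (rule expo_calc(1)[OF c(4) c(1)])
      moreover have "real n * l\<^sup>2 * (c0 * alpha (m n)) = c0 * ln (real n)"
        unfolding l_def by (rule expo_calc(2)[OF c(4) c(1)])
      ultimately have "- l * T n + real n * l\<^sup>2 * (c0 * alpha (m n)) = - (C1 * ln (real n)) + c0 * ln (real n)"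
        by simp
      also have "\<dots> = - (C1 - c0) * ln (real n)" by (simp add: algebra_simps)
      also have "C1 - c0 = real k" by (simp add: C1_def k_def)
      finally show ?thesis .
    qed
    have npos: "0 < real n" using c(4) by simp
    have expeq: "exp (- real k * ln (real n)) = inverse (real n ^ k)"
    proof -
      have "exp (real k * ln (real n)) = exp (ln (real n)) ^ k" by (rule exp_of_nat_mult)
      also have "\<dots> = real n ^ k" using npos by simp
      finally show ?thesis by (simp add: exp_minus)
    qed
    have ev: "measure M (Ev n p) \<le> 2 * inverse (real n ^ k)" if p: "p \<in> Qn n" for p
    proof -
      have "p \<in> PF n \<times> K n" using p Qsub by blast
      hence "fst p \<in> PF n" by auto
      hence pb: "fst p \<in> sets borel" by (rule PFb)
      have ob: "Om n (snd p) \<in> sets borel" by (simp add: Om_def)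
      have V: "measure \<mu> ((fst p - Om n (snd p)) \<union> (Om n (snd p) - fst p)) \<le> c0 * alpha (m n)"
        using p by (simp add: Qn_def)
      have "measure M (Ev n p) \<le> 2 * exp (- l * T n + real n * l\<^sup>2 * (c0 * alpha (m n)))"
        unfolding Ev_def by (rule pair_tail[OF PM indep distr Xm pb ob V l])
      moreover have "exp (- l * T n + real n * l\<^sup>2 * (c0 * alpha (m n))) = inverse (real n ^ k)"
        unfolding ex by (rule expeq)
      ultimately show ?thesis by simp
    qed
    have "measure M (E n) = measure M (\<Union>p\<in>Qn n. Ev n p)" using nN by (simp add: E_def)
    also have "\<dots> \<le> (\<Sum>p\<in>Qn n. measure M (Ev n p))"
      by (rule measure_UNION_le[OF finQ]) (rule EvQ)
    also have "\<dots> \<le> (\<Sum>p\<in>Qn n. 2 * inverse (real n ^ k))" by (rule sum_mono) (rule ev)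
    also have "\<dots> = real (card (Qn n)) * (2 * inverse (real n ^ k))" by simp
    also have "\<dots> \<le> real n ^ (12 * dd) * (2 * inverse (real n ^ k))"
    proof (rule mult_right_mono)
      have "card (Qn n) \<le> card (PF n \<times> K n)" by (rule card_mono) (use finPF finK Qsub in auto)
      also have "\<dots> = card (PF n) * card (K n)" by (simp add: card_cartesian_product)
      also have "\<dots> \<le> (2 * max 2 (m n)) ^ dd * (m n + 1) ^ dd" by (intro mult_mono cardPF cardK) auto
      also have "\<dots> = (2 * m n) ^ dd * (m n + 1) ^ dd" using c(1) by (simp add: max_def)
      finally have "real (card (Qn n)) \<le> real ((2 * m n) ^ dd * (m n + 1) ^ dd)" by linarith
      also have "\<dots> \<le> real n ^ (12 * dd)"
        by (rule card_bound[OF c(4) c(1) m_bound[OF c(1) c(4) c(3)]])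
      finally show "real (card (Qn n)) \<le> real n ^ (12 * dd)" .
    qed simp
    also have "\<dots> = 2 * inverse (real n ^ 2)"
    proof -
      have p: "real n ^ k = real n ^ (12*dd) * real n ^ 2" unfolding k_def by (rule power_add)
      have q: "real n ^ (12*dd) \<noteq> 0" using npos by simp
      show ?thesis unfolding p using q by (simp add: inverse_mult_distrib)
    qed
    finally show ?thesis .
  qed
  have summ: "summable (\<lambda>n. measure M (E n))"
  proof (rule summable_comparison_test'[where N=N1])
    show "summable (\<lambda>n. 2 * inverse (real n ^ 2))"
      by (rule summable_mult, rule inverse_power_summable) simp
    show "norm (measure M (E n)) \<le> 2 * inverse (real n ^ 2)" if "N1 \<le> n" for n
      using Ebound[OF that] by simp
  qed
  have BC: "AE \<omega> in M. eventually (\<lambda>n. \<omega> \<in> space M - E n) sequentially"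
    by (rule borel_cantelli_AE1[OF Es _ summ]) (simp add: emeasure_eq_measure)
  show ?thesis
  proof (rule eventually_mono[OF BC])
    fix \<omega> assume evw: "eventually (\<lambda>n. \<omega> \<in> space M - E n) sequentially"
    have evn: "eventually (\<lambda>n. N1 \<le> n \<and> \<omega> \<in> space M - E n) sequentially"
      using eventually_conj[OF eventually_ge_at_top[of N1] evw] by simp
    have main: "\<bar>empcdf X n \<omega> (scalek k (m n)) - cdfv \<mu> (scalek k (m n))
             - empcdf X n \<omega> x + cdfv \<mu> x\<bar> \<le> (C1 + real dd) * beta n (m n)"
      if nn: "N1 \<le> n \<and> \<omega> \<in> space M - E n" and x: "x \<in> simplexInt" and k: "k \<in> Nxm x (m n)" for n x k
    proof -
      have nN: "N1 \<le> n" and om: "\<omega> \<in> space M" and nE: "\<omega> \<notin> E n" using nn by auto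
      note c = cond[OF nN]
      have npos: "0 < n" using c(4) by simp
      define a where "a = scalek k (m n)"
      have Oa: "Om n k = orth a" by (simp add: Om_def a_def)
      obtain A B where AB: "\<forall>j. A j \<in> Hf n j \<and> B j \<in> Hf n j" and sub1: "boxs A \<subseteq> orth x"
        and sub2: "orth x \<subseteq> boxs B" and gap0: "measure \<mu> (boxs B - boxs A) \<le> real CARD('d) / real (max 2 (m n))"
        using Hf2[of n x] by blast
      have mx: "max 2 (m n) = m n" using c(1) by simp
      define G where "G = real dd / real (m n)"
      have gap: "measure \<mu> (boxs B - boxs A) \<le> G" using gap0 mx by (simp add: G_def dd_def)
      have APF: "boxs A \<in> PF n" unfolding PF_def using AB by (auto simp: PiE_UNIV_domain)
      have BPF: "boxs B \<in> PF n" unfolding PF_def using AB by (auto simp: PiE_UNIV_domain)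
      have kle: "k$i \<le> m n" for i
      proof -
        have "k$i \<le> (\<Sum>j\<in>UNIV. k$j)" by (rule member_le_sum) auto
        thus ?thesis using k by (simp add: Nxm_def)
      qed
      have kK: "k \<in> K n"
      proof -
        have "(\<lambda>i. k$i) \<in> PiE UNIV (\<lambda>_. {..m n})" using kle by (auto simp: PiE_UNIV_domain)
        moreover have "k = vec_lambda (\<lambda>i. k$i)" by simp
        ultimately show ?thesis unfolding K_def by blast
      qed
      have xS: "x \<in> simplexS" using x by (auto simp: simplexInt_def simplexS_def less_imp_le)
      have aS: "a \<in> simplexS"
      proof -
        have mp: "0 < real (m n)" using c(1) by simp
        have "a$j \<le> 1" for j using kle[of j] mp by (simp add: a_def scalek_def)
        moreover have "0 \<le> a$j" for j by (simp add: a_def scalek_def)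
        moreover have "(\<Sum>j\<in>UNIV. \<bar>a$j\<bar>) = real (\<Sum>j\<in>UNIV. k$j) / real (m n)"
          by (simp add: a_def scalek_def sum_divide_distrib)
        moreover have "real (\<Sum>j\<in>UNIV. k$j) \<le> real (m n)"
        proof -
          have "(\<Sum>j\<in>UNIV. k$j) \<le> m n" using k by (simp add: Nxm_def)
          thus ?thesis by (simp only: of_nat_le_iff)
        qed
        ultimately show ?thesis using mp by (auto simp: simplexS_def)
      qed
      have h1: "\<forall>j. \<bar>a$j - x$j\<bar> \<le> alpha (m n)" using k by (simp add: Nxm_def a_def scalek_def)
      have h2: "\<forall>j. \<bar>x$j - a$j\<bar> \<le> alpha (m n)" using h1 by (simp add: abs_minus_commute)
      have v1: "measure \<mu> (orth a - orth x) \<le> L * (real dd * alpha (m n))"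
        using orth_diff_le[OF FM smu Lip aS xS h1] by (simp add: dd_def)
      have v2: "measure \<mu> (orth x - orth a) \<le> L * (real dd * alpha (m n))"
        using orth_diff_le[OF FM smu Lip xS aS h2] by (simp add: dd_def)
      have Ga: "G \<le> real dd * alpha (m n)"
      proof -
        have "1 / real (m n) \<le> alpha (m n)" using c(2) c(3) by linarith
        hence "real dd * (1 / real (m n)) \<le> real dd * alpha (m n)" by (intro mult_left_mono) auto
        thus ?thesis by (simp add: G_def)
      qed
      have Gb: "G \<le> real dd * beta n (m n)"
      proof -
        have "real dd * (1 / real (m n)) \<le> real dd * beta n (m n)" using c(2) by (intro mult_left_mono) auto
        thus ?thesis by (simp add: G_def)
      qed
      have Ab: "boxs A \<in> sets borel" using APF by (rule PFb)
      have Bb: "boxs B \<in> sets borel" using BPF by (rule PFb)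
      note vp = var_pair[OF FM smu Ab Bb sub1 sub2 gap v1 v2]
      have c0eq: "G + 2 * (L * (real dd * alpha (m n))) \<le> c0 * alpha (m n)"
        using Ga by (simp add: c0_def algebra_simps)
      have QB: "(boxs B, k) \<in> Qn n" using vp(1) c0eq BPF kK by (simp add: Qn_def Oa)
      have QA: "(boxs A, k) \<in> Qn n" using vp(2) c0eq APF kK by (simp add: Qn_def Oa)
      have "\<omega> \<notin> Ev n (boxs B, k)" using nE QB nN by (auto simp: E_def)
      hence gB: "\<bar>(\<Sum>i\<in>{1..n}. indicator (boxs B) (X i \<omega>) - indicator (orth a) (X i \<omega>))
               - real n * (measure \<mu> (boxs B) - measure \<mu> (orth a))\<bar> < T n"
        using om by (simp add: Ev_def Oa not_le)
      have "\<omega> \<notin> Ev n (boxs A, k)" using nE QA nN by (auto simp: E_def)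
      hence gA: "\<bar>(\<Sum>i\<in>{1..n}. indicator (boxs A) (X i \<omega>) - indicator (orth a) (X i \<omega>))
               - real n * (measure \<mu> (boxs A) - measure \<mu> (orth a))\<bar> < T n"
        using om by (simp add: Ev_def Oa not_le)
      have "\<bar>empcdf X n \<omega> a - cdfv \<mu> a - empcdf X n \<omega> x + cdfv \<mu> x\<bar> \<le> T n / real n + G"
        by (rule det_step[where X=X and \<omega>=\<omega> and a=a and T="T n", OF FM smu Ab Bb sub1 sub2 gap npos gA gB])
      also have "T n / real n = C1 * beta n (m n)" using npos by (simp add: T_def)
      finally show ?thesis using Gb by (simp add: a_def algebra_simps)
    qed
    show "\<exists>C. eventually (\<lambda>n. \<forall>x\<in>simplexInt. \<forall>k\<in>Nxm x (m n).
           \<bar>empcdf X n \<omega> (scalek k (m n)) - cdfv \<mu> (scalek k (m n))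
             - empcdf X n \<omega> x + cdfv \<mu> x\<bar> \<le> C * beta n (m n)) sequentially"
      by (rule exI[of _ "C1 + real dd"], rule eventually_mono[OF evn]) (use main in blast)
  qed
qed

end
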